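(* Let $E$ be a finite-dimensional real vector space with dual space $E^{*}$. An extended-real-valued function $h$ on $E$ is generalized affine if and only if there exist finite sequences (possibly of length zero) of vectors $\eta_1,\dots,\eta_j\in E^{*}$ and scalars $\delta_1,\dots,\delta_j$ such that $\eta_1,\dots,\eta_j$ are linearly independent and $h$ has the following form. Define $H_0=E$ and, for $0<i\le j$, $$H_i=\{x\in H_{i-1}:\langle x,\eta_i\rangle=\delta_i\},\quad C_i^{+}=\{x\in H_{i-1}:\langle x,\eta_i\rangle>\delta_i\},\quad C_i^{-}=\{x\in H_{i-1}:\langle x,\eta_i\rangle<\delta_i\},$$ all of these sets (if any) being nonempty. Then $h(x)=+\infty$ whenever $x\in C_i^{+}$ for some $i$, $h(x)=-\infty$ whenever $x\in C_i^{-}$ for some $i$, and $h$ restricted to $H_j$ is either affine or constant, where $+\infty$ and $-\infty$ are allowed as constant values.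
   Context: $\langle\cdot,\cdot\rangle$ is the canonical bilinear pairing of $E$ and $E^{*}$. A generalized affine function is a function $E\to\mathbb{R}\cup\{\pm\infty\}$ that is both convex and concave in the extended-real-valued sense. When $j=0$, the statement says $h$ is affine on $E$ or constant on $E$. *)

theory Defs
  imports "HOL-Analysis.Analysis"
begin

definition ext_convex :: "('a::real_vector \<Rightarrow> ereal) \<Rightarrow> bool" where
  "ext_convex h \<longleftrightarrow> convex {(x, \<mu>::real). h x \<le> ereal \<mu>}"

definition ext_concave :: "('a::real_vector \<Rightarrow> ereal) \<Rightarrow> bool" where
  "ext_concave h \<longleftrightarrow> convex {(x, \<mu>::real). ereal \<mu> \<le> h x}"

definition generalized_affine :: "('a::real_vector \<Rightarrow> ereal) \<Rightarrow> bool" where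
  "generalized_affine h \<longleftrightarrow> ext_convex h \<and> ext_concave h"

definition lin_indep_functionals :: "('a \<Rightarrow> real) list \<Rightarrow> bool" where
  "lin_indep_functionals eta \<longleftrightarrow>
     (\<forall>c::nat \<Rightarrow> real. (\<forall>x. (\<Sum>i<length eta. c i * (eta ! i) x) = 0) \<longrightarrow>
        (\<forall>i<length eta. c i = 0))"

text \<open>H i (0-indexed lists: eta ! i is the paper's eta_(i+1)).\<close>
fun Hset :: "('a \<Rightarrow> real) list \<Rightarrow> real list \<Rightarrow> nat \<Rightarrow> 'a set" where
  "Hset eta delta 0 = UNIV"
| "Hset eta delta (Suc i) = {x \<in> Hset eta delta i. (eta ! i) x = delta ! i}"

definition Cplus :: "('a \<Rightarrow> real) list \<Rightarrow> real list \<Rightarrow> nat \<Rightarrow> 'a set" where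
  "Cplus eta delta i = {x \<in> Hset eta delta i. (eta ! i) x > delta ! i}"

definition Cminus :: "('a \<Rightarrow> real) list \<Rightarrow> real list \<Rightarrow> nat \<Rightarrow> 'a set" where
  "Cminus eta delta i = {x \<in> Hset eta delta i. (eta ! i) x < delta ! i}"

definition affine_on_set :: "('a::real_vector \<Rightarrow> ereal) \<Rightarrow> 'a set \<Rightarrow> bool" where
  "affine_on_set h S \<longleftrightarrow> (\<exists>l c. linear l \<and> (\<forall>x\<in>S. h x = ereal (l x + c)))"

definition constant_on_set :: "('a \<Rightarrow> ereal) \<Rightarrow> 'a set \<Rightarrow> bool" where
  "constant_on_set h S \<longleftrightarrow> (\<exists>c::ereal. \<forall>x\<in>S. h x = c)"

end

theory Submission
  imports Defs
begin

fun Hs :: "'a set \<Rightarrow> ('a \<Rightarrow> real) list \<Rightarrow> real list \<Rightarrow> nat \<Rightarrow> 'a set" where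
  "Hs A eta delta 0 = A"
| "Hs A eta delta (Suc i) = {x \<in> Hs A eta delta i. (eta ! i) x = delta ! i}"

lemma Hset_Hs: "Hset eta delta i = Hs UNIV eta delta i"
  by (induction i) auto

lemma Hs_Cons: "Hs A (e # es) (d # ds) (Suc i) = Hs {x\<in>A. e x = d} es ds i"
  by (induction i) auto

lemma Hs_sub: "Hs A eta delta i \<subseteq> A"
  by (induction i) auto

lemma Hs_prev: "x \<in> Hs A eta delta k \<Longrightarrow> i < k \<Longrightarrow> (eta ! i) x = delta ! i"
proof (induction k)
  case 0 then show ?case by simp
next
  case (Suc k) then show ?case by (cases "i = k") auto
qed

lemma convex_level:
  fixes e :: "'a::real_vector \<Rightarrow> real"
  assumes "linear e" "convex A"
  shows "convex {x\<in>A. e x = d}"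
proof -
  have "e (u *\<^sub>R x + v *\<^sub>R y) = d" if "e x = d" "e y = d" "u + v = 1" for x y u v
  proof -
    have "e (u *\<^sub>R x + v *\<^sub>R y) = u * d + v * d"
      using that assms(1) by (simp add: linear_add linear_scale)
    then show ?thesis using that by (simp add: distrib_right[symmetric])
  qed
  then show ?thesis using assms(2) unfolding convex_def by auto
qed

lemma convex_pairI:
  assumes "\<And>x1 m1 x2 m2 u v. P x1 m1 \<Longrightarrow> P x2 m2 \<Longrightarrow> 0\<le>u \<Longrightarrow> 0\<le>v \<Longrightarrow> u + v = 1
     \<Longrightarrow> P (u*\<^sub>R x1 + v *\<^sub>R x2) (u * m1 + v * m2)"
  shows "convex {(x,m::real). P x m}"
  using assms unfolding convex_def by auto

lemma convex_pairD:
  assumes "convex {(x,m::real). P x m}" "P x1 m1" "P x2 m2" "0\<le>u" "0\<le>v" "u + v = 1"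
  shows "P (u*\<^sub>R x1 + v *\<^sub>R x2) (u * m1 + v * m2)"
  using convexD[OF assms(1), of "(x1,m1)" "(x2,m2)" u v] assms(2-) by auto

lemma epi_convex:
  fixes h :: "'a::real_vector \<Rightarrow> ereal"
  assumes "convex A" "length delta = length eta" "\<forall>i<length eta. linear (eta!i)"
 "\<forall>i<length eta. \<forall>x\<in>Hs A eta delta i. (eta!i) x > delta!i \<longrightarrow> h x = \<infinity>"
 "\<forall>i<length eta. \<forall>x\<in>Hs A eta delta i. (eta!i) x < delta!i \<longrightarrow> h x = -\<infinity>"
 "affine_on_set h (Hs A eta delta (length eta)) \<or> constant_on_set h (Hs A eta delta (length eta))"
 shows "convex {(x,\<mu>::real). x \<in> A \<and> h x \<le> ereal \<mu>}"
  using assms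
proof (induction eta arbitrary: A delta)
  case Nil
  then have d: "delta = []" by simp
  show ?case
  proof (cases "affine_on_set h A")
    case True
    then obtain l c where l: "linear l" "\<forall>x\<in>A. h x = ereal (l x + c)"
      unfolding affine_on_set_def by blast
    show ?thesis
    proof (rule convex_pairI, elim conjE, intro conjI)
      fix m1 m2 u v :: real
      fix x1 x2 :: 'a
      assume a: "x1 \<in> A" "h x1 \<le> ereal m1" "x2 \<in> A" "h x2 \<le> ereal m2" "0 \<le> u" "0 \<le> v" "u + v = 1"
      show z: "u *\<^sub>R x1 + v *\<^sub>R x2 \<in> A" using convexD[OF Nil(1)] a by blast
      have "l x1 + c \<le> m1" "l x2 + c \<le> m2" using a l by auto
      then have "u * (l x1 + c) + v * (l x2 + c) \<le> u * m1 + v * m2"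
        using a by (meson add_mono mult_left_mono)
      moreover have "l (u *\<^sub>R x1 + v *\<^sub>R x2) + c = u * (l x1 + c) + v * (l x2 + c)"
      proof -
        have "l (u *\<^sub>R x1 + v *\<^sub>R x2) + c = u * l x1 + v * l x2 + (u + v) * c"
          using l(1) a(7) by (simp add: linear_add linear_scale)
        then show ?thesis by (simp add: algebra_simps)
      qed
      ultimately show "h (u *\<^sub>R x1 + v *\<^sub>R x2) \<le> ereal (u * m1 + v * m2)"
        using l z by simp
    qed
  next
    case False
    then obtain c where c: "\<forall>x\<in>A. h x = c" using Nil(6) d unfolding constant_on_set_def by auto
    show ?thesis
    proof (rule convex_pairI, elim conjE, intro conjI)
      fix m1 m2 u v :: real
      fix x1 x2 :: 'a
      assume a: "x1 \<in> A" "h x1 \<le> ereal m1" "x2 \<in> A" "h x2 \<le> ereal m2" "0 \<le> u" "0 \<le> v" "u + v = 1"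
      show z: "u *\<^sub>R x1 + v *\<^sub>R x2 \<in> A" using convexD[OF Nil(1)] a by blast
      have "c \<le> ereal m1" "c \<le> ereal m2" using a c by auto
      then have "c \<le> ereal (u * m1 + v * m2)"
      proof (cases c)
        case (real r)
        then have "r \<le> m1" "r \<le> m2" using \<open>c \<le> ereal m1\<close> \<open>c \<le> ereal m2\<close> by auto
        then have "u * r + v * r \<le> u * m1 + v * m2" using a by (meson add_mono mult_left_mono)
        then show ?thesis using real a(7) by (simp add: distrib_right[symmetric])
      qed auto
      then show "h (u *\<^sub>R x1 + v *\<^sub>R x2) \<le> ereal (u * m1 + v * m2)" using c z by simp
    qed
  qed
next
  case (Cons e es)
  obtain d ds where dd: "delta = d # ds" using Cons(3) by (cases delta) auto
  define A' where "A' = {x\<in>A. e x = d}"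
  have le: "linear e" using Cons(4) by auto
  have cA': "convex A'" unfolding A'_def using convex_level[OF le Cons(2)] .
  have IH: "convex {(x,\<mu>::real). x \<in> A' \<and> h x \<le> ereal \<mu>}"
  proof (rule Cons(1)[OF cA'])
    show "length ds = length es" using Cons(3) dd by simp
    show "\<forall>i<length es. linear (es ! i)" using Cons(4) by auto
    show "\<forall>i<length es. \<forall>x\<in>Hs A' es ds i. ds ! i < (es ! i) x \<longrightarrow> h x = \<infinity>"
    proof (intro allI impI ballI)
      fix i x assume "i < length es" "x \<in> Hs A' es ds i" "ds ! i < (es ! i) x"
      then show "h x = \<infinity>" using Cons(5)[rule_format, of "Suc i" x]
        unfolding dd Hs_Cons A'_def by simp
    qed
    show "\<forall>i<length es. \<forall>x\<in>Hs A' es ds i. (es ! i) x < ds ! i \<longrightarrow> h x = -\<infinity>"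
    proof (intro allI impI ballI)
      fix i x assume "i < length es" "x \<in> Hs A' es ds i" "(es ! i) x < ds ! i"
      then show "h x = -\<infinity>" using Cons(6)[rule_format, of "Suc i" x]
        unfolding dd Hs_Cons A'_def by simp
    qed
    show "affine_on_set h (Hs A' es ds (length es)) \<or> constant_on_set h (Hs A' es ds (length es))"
      using Cons(7) unfolding dd A'_def by (simp add: Hs_Cons[symmetric])
  qed
  have gt: "h x = \<infinity>" if "x \<in> A" "e x > d" for x
    using Cons(5)[rule_format, of 0 x] that dd by simp
  have lt: "h x = -\<infinity>" if "x \<in> A" "e x < d" for x
    using Cons(6)[rule_format, of 0 x] that dd by simp
  show ?case
  proof (rule convex_pairI, elim conjE, intro conjI)
    fix m1 m2 u v :: real
    fix x1 x2 :: 'a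
    assume a: "x1 \<in> A" "h x1 \<le> ereal m1" "x2 \<in> A" "h x2 \<le> ereal m2" "0 \<le> u" "0 \<le> v" "u + v = 1"
    show z: "u *\<^sub>R x1 + v *\<^sub>R x2 \<in> A" using convexD[OF Cons(2)] a by blast
    have e1: "e x1 \<le> d" using gt[of x1] a by force
    have e2: "e x2 \<le> d" using gt[of x2] a by force
    have ez: "e (u *\<^sub>R x1 + v *\<^sub>R x2) = u * e x1 + v * e x2"
      using le by (simp add: linear_add linear_scale)
    show "h (u *\<^sub>R x1 + v *\<^sub>R x2) \<le> ereal (u * m1 + v * m2)"
    proof (cases "e (u *\<^sub>R x1 + v *\<^sub>R x2) < d")
      case True then show ?thesis using lt z by simp
    next
      case False
      show ?thesis
      proof (cases "u = 0")
        case True then show ?thesis using a by simp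
      next
        case u0: False
        show ?thesis
        proof (cases "v = 0")
          case True then show ?thesis using a by simp
        next
          case v0: False
          have "u * e x1 \<le> u * d" "v * e x2 \<le> v * d" using e1 e2 a by (auto intro: mult_left_mono)
          moreover have "u * d + v * d = d" using a(7) by (simp add: distrib_right[symmetric])
          ultimately have "u * e x1 = u * d" "v * e x2 = v * d" using False ez by linarith+
          then have "e x1 = d" "e x2 = d" using u0 v0 by auto
          then show ?thesis using convex_pairD[OF IH, of x1 m1 x2 m2 u v] a unfolding A'_def by auto
        qed
      qed
    qed
  qed
qed

lemma hyp_convex:
  fixes h :: "'a::real_vector \<Rightarrow> ereal"
  assumes "convex A" "length delta = length eta" "\<forall>i<length eta. linear (eta!i)"
 "\<forall>i<length eta. \<forall>x\<in>Hs A eta delta i. (eta!i) x > delta!i \<longrightarrow> h x = \<infinity>"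
 "\<forall>i<length eta. \<forall>x\<in>Hs A eta delta i. (eta!i) x < delta!i \<longrightarrow> h x = -\<infinity>"
 "affine_on_set h (Hs A eta delta (length eta)) \<or> constant_on_set h (Hs A eta delta (length eta))"
 shows "convex {(x,\<mu>::real). x \<in> A \<and> ereal \<mu> \<le> h x}"
  using assms
proof (induction eta arbitrary: A delta)
  case Nil
  then have d: "delta = []" by simp
  show ?case
  proof (cases "affine_on_set h A")
    case True
    then obtain l c where l: "linear l" "\<forall>x\<in>A. h x = ereal (l x + c)"
      unfolding affine_on_set_def by blast
    show ?thesis
    proof (rule convex_pairI, elim conjE, intro conjI)
      fix m1 m2 u v :: real
      fix x1 x2 :: 'a
      assume a: "x1 \<in> A" "ereal m1 \<le> h x1" "x2 \<in> A" "ereal m2 \<le> h x2" "0 \<le> u" "0 \<le> v" "u + v = 1"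
      show z: "u *\<^sub>R x1 + v *\<^sub>R x2 \<in> A" using convexD[OF Nil(1)] a by blast
      have "m1 \<le> l x1 + c" "m2 \<le> l x2 + c" using a l by auto
      then have "u * m1 + v * m2 \<le> u * (l x1 + c) + v * (l x2 + c)"
        using a by (meson add_mono mult_left_mono)
      moreover have "l (u *\<^sub>R x1 + v *\<^sub>R x2) + c = u * (l x1 + c) + v * (l x2 + c)"
      proof -
        have "l (u *\<^sub>R x1 + v *\<^sub>R x2) + c = u * l x1 + v * l x2 + (u + v) * c"
          using l(1) a(7) by (simp add: linear_add linear_scale)
        then show ?thesis by (simp add: algebra_simps)
      qed
      ultimately show "ereal (u * m1 + v * m2) \<le> h (u *\<^sub>R x1 + v *\<^sub>R x2)"
        using l z by simp
    qed
  next
    case False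
    then obtain c where c: "\<forall>x\<in>A. h x = c" using Nil(6) d unfolding constant_on_set_def by auto
    show ?thesis
    proof (rule convex_pairI, elim conjE, intro conjI)
      fix m1 m2 u v :: real
      fix x1 x2 :: 'a
      assume a: "x1 \<in> A" "ereal m1 \<le> h x1" "x2 \<in> A" "ereal m2 \<le> h x2" "0 \<le> u" "0 \<le> v" "u + v = 1"
      show z: "u *\<^sub>R x1 + v *\<^sub>R x2 \<in> A" using convexD[OF Nil(1)] a by blast
      have "ereal m1 \<le> c" "ereal m2 \<le> c" using a c by auto
      then have "ereal (u * m1 + v * m2) \<le> c"
      proof (cases c)
        case (real r)
        then have "m1 \<le> r" "m2 \<le> r" using \<open>ereal m1 \<le> c\<close> \<open>ereal m2 \<le> c\<close> by auto
        then have "u * m1 + v * m2 \<le> u * r + v * r" using a by (meson add_mono mult_left_mono)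
        then show ?thesis using real a(7) by (simp add: distrib_right[symmetric])
      qed auto
      then show "ereal (u * m1 + v * m2) \<le> h (u *\<^sub>R x1 + v *\<^sub>R x2)" using c z by simp
    qed
  qed
next
  case (Cons e es)
  obtain d ds where dd: "delta = d # ds" using Cons(3) by (cases delta) auto
  define A' where "A' = {x\<in>A. e x = d}"
  have le: "linear e" using Cons(4) by auto
  have cA': "convex A'" unfolding A'_def using convex_level[OF le Cons(2)] .
  have IH: "convex {(x,\<mu>::real). x \<in> A' \<and> ereal \<mu> \<le> h x}"
  proof (rule Cons(1)[OF cA'])
    show "length ds = length es" using Cons(3) dd by simp
    show "\<forall>i<length es. linear (es ! i)" using Cons(4) by auto
    show "\<forall>i<length es. \<forall>x\<in>Hs A' es ds i. ds ! i < (es ! i) x \<longrightarrow> h x = \<infinity>"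
    proof (intro allI impI ballI)
      fix i x assume "i < length es" "x \<in> Hs A' es ds i" "ds ! i < (es ! i) x"
      then show "h x = \<infinity>" using Cons(5)[rule_format, of "Suc i" x]
        unfolding dd Hs_Cons A'_def by simp
    qed
    show "\<forall>i<length es. \<forall>x\<in>Hs A' es ds i. (es ! i) x < ds ! i \<longrightarrow> h x = -\<infinity>"
    proof (intro allI impI ballI)
      fix i x assume "i < length es" "x \<in> Hs A' es ds i" "(es ! i) x < ds ! i"
      then show "h x = -\<infinity>" using Cons(6)[rule_format, of "Suc i" x]
        unfolding dd Hs_Cons A'_def by simp
    qed
    show "affine_on_set h (Hs A' es ds (length es)) \<or> constant_on_set h (Hs A' es ds (length es))"
      using Cons(7) unfolding dd A'_def by (simp add: Hs_Cons[symmetric])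
  qed
  have gt: "h x = \<infinity>" if "x \<in> A" "e x > d" for x
    using Cons(5)[rule_format, of 0 x] that dd by simp
  have lt: "h x = -\<infinity>" if "x \<in> A" "e x < d" for x
    using Cons(6)[rule_format, of 0 x] that dd by simp
  show ?case
  proof (rule convex_pairI, elim conjE, intro conjI)
    fix m1 m2 u v :: real
    fix x1 x2 :: 'a
    assume a: "x1 \<in> A" "ereal m1 \<le> h x1" "x2 \<in> A" "ereal m2 \<le> h x2" "0 \<le> u" "0 \<le> v" "u + v = 1"
    show z: "u *\<^sub>R x1 + v *\<^sub>R x2 \<in> A" using convexD[OF Cons(2)] a by blast
    have e1: "d \<le> e x1" using lt[of x1] a by force
    have e2: "d \<le> e x2" using lt[of x2] a by force
    have ez: "e (u *\<^sub>R x1 + v *\<^sub>R x2) = u * e x1 + v * e x2"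
      using le by (simp add: linear_add linear_scale)
    show "ereal (u * m1 + v * m2) \<le> h (u *\<^sub>R x1 + v *\<^sub>R x2)"
    proof (cases "e (u *\<^sub>R x1 + v *\<^sub>R x2) > d")
      case True then show ?thesis using gt z by simp
    next
      case False
      show ?thesis
      proof (cases "u = 0")
        case True then show ?thesis using a by simp
      next
        case u0: False
        show ?thesis
        proof (cases "v = 0")
          case True then show ?thesis using a by simp
        next
          case v0: False
          have "u * d \<le> u * e x1" "v * d \<le> v * e x2" using e1 e2 a by (auto intro: mult_left_mono)
          moreover have "u * d + v * d = d" using a(7) by (simp add: distrib_right[symmetric])
          ultimately have "u * e x1 = u * d" "v * e x2 = v * d" using False ez by linarith+
          then have "e x1 = d" "e x2 = d" using u0 v0 by auto
          then show ?thesis using convex_pairD[OF IH, of x1 m1 x2 m2 u v] a unfolding A'_def by auto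
        qed
      qed
    qed
  qed
qed


lemma lin_indep_from:
  assumes "\<forall>i<length eta. {x\<in>Hs A eta delta i. (eta!i) x > delta!i} \<noteq> {} \<and>
             {x\<in>Hs A eta delta i. (eta!i) x < delta!i} \<noteq> {}"
  shows "lin_indep_functionals eta"
  unfolding lin_indep_functionals_def
proof (rule allI, rule impI)
  fix c :: "nat \<Rightarrow> real"
  assume s0: "\<forall>x. (\<Sum>i<length eta. c i * (eta ! i) x) = 0"
  show "\<forall>i<length eta. c i = 0"
  proof (rule ccontr)
    assume "\<not> (\<forall>i<length eta. c i = 0)"
    define S where "S = {i. i < length eta \<and> c i \<noteq> 0}"
    have fS: "finite S" unfolding S_def by simp
    have nS: "S \<noteq> {}" using \<open>\<not> (\<forall>i<length eta. c i = 0)\<close> unfolding S_def by auto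
    define k where "k = Max S"
    have kS: "k \<in> S" unfolding k_def using fS nS by simp
    have kmax: "i \<le> k" if "i \<in> S" for i unfolding k_def using fS that by simp
    have kl: "k < length eta" "c k \<noteq> 0" using kS unfolding S_def by auto
    obtain x where x: "x \<in> Hs A eta delta k" "(eta!k) x > delta!k" using assms[rule_format, OF kl(1)] by blast
    obtain y where y: "y \<in> Hs A eta delta k" "(eta!k) y < delta!k" using assms[rule_format, OF kl(1)] by blast
    have eq: "c i * ((eta ! i) x - (eta ! i) y) = (if i = k then c k * ((eta ! k) x - (eta ! k) y) else 0)"
      if i: "i < length eta" for i
    proof (cases "i = k")
      case False
      show ?thesis
      proof (cases "i < k")
        case True
        then have "(eta ! i) x = delta ! i" "(eta ! i) y = delta ! i"
          using Hs_prev[OF x(1) True] Hs_prev[OF y(1) True] by auto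
        then show ?thesis using False by simp
      next
        case nlt: False
        then have "i \<notin> S" using kmax False by fastforce
        then have "c i = 0" using i unfolding S_def by auto
        then show ?thesis using False by simp
      qed
    qed simp
    have "0 = (\<Sum>i<length eta. c i * (eta ! i) x) - (\<Sum>i<length eta. c i * (eta ! i) y)"
      using s0[rule_format, of x] s0[rule_format, of y] by linarith
    also have "\<dots> = (\<Sum>i<length eta. c i * ((eta ! i) x - (eta ! i) y))"
      by (simp add: right_diff_distrib sum_subtractf)
    also have "\<dots> = (\<Sum>i<length eta. if i = k then c k * ((eta ! k) x - (eta ! k) y) else 0)"
      by (rule sum.cong[OF refl]) (simp add: eq)
    also have "\<dots> = c k * ((eta ! k) x - (eta ! k) y)"
      using kl by simp
    finally have "c k * ((eta ! k) x - (eta ! k) y) = 0" by simp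
    then show False using kl x y by simp
  qed
qed


lemma ereal_ub: "(x::ereal) < \<infinity> \<Longrightarrow> \<exists>m. x \<le> ereal m"
  by (cases x) auto

lemma ereal_lb: "(x::ereal) > -\<infinity> \<Longrightarrow> \<exists>m. ereal m \<le> x"
  by (cases x) auto

lemma mix_minus:
  fixes h :: "'a::real_vector \<Rightarrow> ereal"
  assumes cv: "convex {(x,\<mu>::real). x \<in> A \<and> h x \<le> ereal \<mu>}"
    and "x \<in> A" "y \<in> A" "h x = -\<infinity>" "h y < \<infinity>" "0 < u" "u \<le> 1"
  shows "h (u *\<^sub>R x + (1 - u) *\<^sub>R y) = -\<infinity>"
proof (rule ereal_bot)
  fix B
  obtain my where my: "h y \<le> ereal my" using ereal_ub[OF assms(5)] by blast
  define mx where "mx = (B - (1 - u) * my) / u"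
  have "h x \<le> ereal mx" using assms(4) by simp
  then have "u *\<^sub>R x + (1 - u) *\<^sub>R y \<in> A \<and> h (u *\<^sub>R x + (1 - u) *\<^sub>R y) \<le> ereal (u * mx + (1 - u) * my)"
    using convex_pairD[OF cv, of x mx y my u "1 - u"] assms my by simp
  moreover have "u * mx + (1 - u) * my = B" unfolding mx_def using assms(6) by simp
  ultimately show "h (u *\<^sub>R x + (1 - u) *\<^sub>R y) \<le> ereal B" by simp
qed

lemma mix_plus:
  fixes h :: "'a::real_vector \<Rightarrow> ereal"
  assumes cv: "convex {(x,\<mu>::real). x \<in> A \<and> ereal \<mu> \<le> h x}"
    and "x \<in> A" "y \<in> A" "h x = \<infinity>" "h y > -\<infinity>" "0 < u" "u \<le> 1"
  shows "h (u *\<^sub>R x + (1 - u) *\<^sub>R y) = \<infinity>"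
proof (rule ereal_top)
  fix B
  obtain my where my: "ereal my \<le> h y" using ereal_lb[OF assms(5)] by blast
  define mx where "mx = (B - (1 - u) * my) / u"
  have "ereal mx \<le> h x" using assms(4) by simp
  then have "u *\<^sub>R x + (1 - u) *\<^sub>R y \<in> A \<and> ereal (u * mx + (1 - u) * my) \<le> h (u *\<^sub>R x + (1 - u) *\<^sub>R y)"
    using convex_pairD[OF cv, of x mx y my u "1 - u"] assms my by simp
  moreover have "u * mx + (1 - u) * my = B" unfolding mx_def using assms(6) by simp
  ultimately show "ereal B \<le> h (u *\<^sub>R x + (1 - u) *\<^sub>R y)" by simp
qed


lemma affine_comb_all:
  fixes H :: "'a::real_vector \<Rightarrow> real"
  assumes "affine A"
    and c01: "\<And>x y u. x \<in> A \<Longrightarrow> y \<in> A \<Longrightarrow> 0 \<le> u \<Longrightarrow> u \<le> 1 \<Longrightarrow>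
               H (u *\<^sub>R x + (1 - u) *\<^sub>R y) = u * H x + (1 - u) * H y"
    and "x \<in> A" "y \<in> A"
  shows "H (u *\<^sub>R x + (1 - u) *\<^sub>R y) = u * H x + (1 - u) * H y"
proof -
  have gt1: "H (u *\<^sub>R x + (1 - u) *\<^sub>R y) = u * H x + (1 - u) * H y"
    if "x \<in> A" "y \<in> A" "u > 1" for x y u
  proof -
    define w where "w = u *\<^sub>R x + (1 - u) *\<^sub>R y"
    have w: "w \<in> A" unfolding w_def using mem_affine[OF assms(1) that(1,2)] by simp
    have "(1/u) *\<^sub>R w + (1 - 1/u) *\<^sub>R y = x"
      unfolding w_def using that(3) by (simp add: algebra_simps scaleR_add_right)
    then have "H x = (1/u) * H w + (1 - 1/u) * H y"
      using c01[OF w that(2), of "1/u"] that(3) by simp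
    then have "u * H x = H w + (u - 1) * H y"
      using that(3) by (simp add: field_simps)
    then show ?thesis unfolding w_def by (simp add: algebra_simps)
  qed
  show ?thesis
  proof (cases "u < 0")
    case True
    have "H ((1 - u) *\<^sub>R y + (1 - (1 - u)) *\<^sub>R x) = (1 - u) * H y + (1 - (1 - u)) * H x"
      using gt1[OF assms(4,3), of "1 - u"] True by simp
    then show ?thesis by (simp add: algebra_simps)
  next
    case False
    then show ?thesis
      using c01[OF assms(3,4), of u] gt1[OF assms(3,4), of u] by force
  qed
qed


lemma affine_finite:
  fixes h :: "'a::euclidean_space \<Rightarrow> ereal"
  assumes aA: "affine A" and ne: "A \<noteq> {}"
    and epi: "convex {(x,\<mu>::real). x \<in> A \<and> h x \<le> ereal \<mu>}"
    and hyp: "convex {(x,\<mu>::real). x \<in> A \<and> ereal \<mu> \<le> h x}"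
    and fin: "\<forall>x\<in>A. h x \<noteq> \<infinity> \<and> h x \<noteq> -\<infinity>"
  shows "affine_on_set h A"
proof -
  define H where "H x = real_of_ereal (h x)" for x
  have hH: "h x = ereal (H x)" if "x \<in> A" for x
    using fin that unfolding H_def by (cases "h x") auto
  have c01: "H (u *\<^sub>R x + (1 - u) *\<^sub>R y) = u * H x + (1 - u) * H y"
    if "x \<in> A" "y \<in> A" "0 \<le> u" "u \<le> 1" for x y u
  proof -
    have z: "u *\<^sub>R x + (1 - u) *\<^sub>R y \<in> A" using mem_affine[OF aA that(1,2)] by simp
    have "H (u *\<^sub>R x + (1 - u) *\<^sub>R y) \<le> u * H x + (1 - u) * H y"
      using convex_pairD[OF epi, of x "H x" y "H y" u "1 - u"] that hH[OF z] hH[OF that(1)] hH[OF that(2)] by simp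
    moreover have "u * H x + (1 - u) * H y \<le> H (u *\<^sub>R x + (1 - u) *\<^sub>R y)"
      using convex_pairD[OF hyp, of x "H x" y "H y" u "1 - u"] that hH[OF z] hH[OF that(1)] hH[OF that(2)] by simp
    ultimately show ?thesis by linarith
  qed
  have call: "H (u *\<^sub>R x + (1 - u) *\<^sub>R y) = u * H x + (1 - u) * H y"
    if "x \<in> A" "y \<in> A" for x y u
    using affine_comb_all[OF aA c01 that] by blast
  obtain a0 where a0: "a0 \<in> A" using ne by blast
  define L where "L = {v. a0 + v \<in> A}"
  have "L = (\<lambda>x. x - a0) ` A"
    unfolding L_def by (auto simp: image_iff) (metis add_diff_cancel_left')
  then have sL: "subspace L" using affine_diffs_subspace_subtract[OF aA a0] by simp
  define f where "f v = H (a0 + v) - H a0" for v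
  have fscale: "f (t *\<^sub>R v) = t * f v" if "v \<in> L" for t v
  proof -
    have "t *\<^sub>R (a0 + v) + (1 - t) *\<^sub>R a0 = a0 + t *\<^sub>R v" by (simp add: algebra_simps)
    then have "H (a0 + t *\<^sub>R v) = t * H (a0 + v) + (1 - t) * H a0"
      using call[of "a0 + v" a0 t] that a0 unfolding L_def by simp
    then show ?thesis unfolding f_def by (simp add: algebra_simps)
  qed
  have fadd: "f (v + w) = f v + f w" if "v \<in> L" "w \<in> L" for v w
  proof -
    have vw: "v + w \<in> L" using subspace_add[OF sL that] .
    have e1: "(1/2) *\<^sub>R (a0 + (v + w)) + (1 - 1/2) *\<^sub>R a0 = (1/2) *\<^sub>R (a0 + v) + (1 - 1/2) *\<^sub>R (a0 + w)"
      by (simp add: algebra_simps)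
    have m1: "a0 + (v + w) \<in> A" "a0 + v \<in> A" "a0 + w \<in> A" using vw that unfolding L_def by auto
    have "(1/2) * H (a0 + (v + w)) + (1 - 1/2) * H a0 = H ((1/2) *\<^sub>R (a0 + (v + w)) + (1 - 1/2) *\<^sub>R a0)"
      by (rule call[OF m1(1) a0, symmetric])
    also have "\<dots> = H ((1/2) *\<^sub>R (a0 + v) + (1 - 1/2) *\<^sub>R (a0 + w))"
      using e1 by (rule arg_cong)
    also have "\<dots> = (1/2) * H (a0 + v) + (1 - 1/2) * H (a0 + w)"
      by (rule call[OF m1(2) m1(3)])
    finally have eq: "(1/2) * H (a0 + (v + w)) + (1 - 1/2) * H a0 = (1/2) * H (a0 + v) + (1 - 1/2) * H (a0 + w)" .
    have eq2: "H (a0 + (v + w)) + H a0 = H (a0 + v) + H (a0 + w)"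
      using eq by (simp add: field_simps)
    show ?thesis unfolding f_def using eq2 by linarith
  qed
  obtain B where B: "B \<subseteq> L" "independent B" "L \<subseteq> span B" "card B = dim L"
    by (rule basis_exists[of L])
  obtain g where g: "linear g" "\<forall>x\<in>B. g x = f x"
    using linear_independent_extend[OF B(2)] by blast
  have gf: "v \<in> L \<and> g v = f v" if "v \<in> span B" for v
    using that
  proof (induction rule: span_induct_alt)
    case base
    then show ?case using subspace_0[OF sL] linear_0[OF g(1)] unfolding f_def by simp
  next
    case (step c x y)
    have xL: "x \<in> L" using step(1) B(1) by blast
    have cx: "c *\<^sub>R x \<in> L" using subspace_scale[OF sL xL] .
    have "g (c *\<^sub>R x + y) = c * g x + g y" using g(1) by (simp add: linear_add linear_scale)
    also have "\<dots> = c * f x + f y" using g(2) step by simp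
    also have "\<dots> = f (c *\<^sub>R x + y)" using fadd[OF cx] fscale[OF xL] step by simp
    finally show ?case using subspace_add[OF sL cx] step by simp
  qed
  have "h x = ereal (g x + (H a0 - g a0))" if "x \<in> A" for x
  proof -
    have "x - a0 \<in> L" unfolding L_def using that by simp
    then have "g (x - a0) = f (x - a0)" using gf B(3) by blast
    then have "g x - g a0 = H x - H a0" unfolding f_def using linear_diff[OF g(1)] by simp
    then show ?thesis using hH[OF that] by simp
  qed
  then show ?thesis unfolding affine_on_set_def using g(1) by blast
qed


definition good :: "('a::real_vector \<Rightarrow> ereal) \<Rightarrow> 'a set \<Rightarrow> ('a \<Rightarrow> real) list \<Rightarrow> real list \<Rightarrow> bool" where
 "good h A eta delta \<longleftrightarrow> length delta = length eta \<and> (\<forall>i<length eta. linear (eta!i)) \<and>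
   (\<forall>i<length eta. Hs A eta delta (Suc i) \<noteq> {} \<and> {x\<in>Hs A eta delta i. (eta!i) x > delta!i} \<noteq> {} \<and>
       {x\<in>Hs A eta delta i. (eta!i) x < delta!i} \<noteq> {}) \<and>
   (\<forall>i<length eta. \<forall>x\<in>Hs A eta delta i. (eta!i) x > delta!i \<longrightarrow> h x = \<infinity>) \<and>
   (\<forall>i<length eta. \<forall>x\<in>Hs A eta delta i. (eta!i) x < delta!i \<longrightarrow> h x = -\<infinity>) \<and>
   (affine_on_set h (Hs A eta delta (length eta)) \<or> constant_on_set h (Hs A eta delta (length eta)))"

lemma good_Nil: "affine_on_set h A \<or> constant_on_set h A \<Longrightarrow> good h A [] []"
  unfolding good_def by simp

lemma good_Cons:
  assumes "linear e" "{x\<in>A. e x = d} \<noteq> {}" "{x\<in>A. e x > d} \<noteq> {}" "{x\<in>A. e x < d} \<noteq> {}"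
    "\<forall>x\<in>A. e x > d \<longrightarrow> h x = \<infinity>" "\<forall>x\<in>A. e x < d \<longrightarrow> h x = -\<infinity>"
    "good h {x\<in>A. e x = d} es ds"
  shows "good h A (e # es) (d # ds)"
  using assms unfolding good_def
  by (simp only: length_Cons All_less_Suc2 Hs_Cons nth_Cons_0 nth_Cons_Suc Hs.simps(1)) simp


lemma aux_div: "(D::real) \<noteq> 0 \<Longrightarrow> c / (2 * D) * D = c / 2"
  by (simp add: field_simps)

lemma main_lemma:
  fixes h :: "'a::euclidean_space \<Rightarrow> ereal"
  shows "affine A \<Longrightarrow> A \<noteq> {} \<Longrightarrow> convex {(x,\<mu>::real). x \<in> A \<and> h x \<le> ereal \<mu>} \<Longrightarrow>
    convex {(x,\<mu>::real). x \<in> A \<and> ereal \<mu> \<le> h x} \<Longrightarrow> \<exists>eta delta. good h A eta delta"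
proof (induction "nat (aff_dim A)" arbitrary: A rule: less_induct)
  case less
  note aA = less.prems(1) and ne = less.prems(2) and epi = less.prems(3) and hyp = less.prems(4)
  define P where "P = {x\<in>A. h x = \<infinity>}"
  define M where "M = {x\<in>A. h x = -\<infinity>}"
  show ?case
  proof (cases "P = {}")
    case P0: True
    show ?thesis
    proof (cases "M = {}")
      case True
      have "affine_on_set h A"
        using affine_finite[OF aA ne epi hyp] P0 True unfolding P_def M_def by blast
      then show ?thesis using good_Nil by blast
    next
      case False
      then obtain x0 where x0: "x0 \<in> A" "h x0 = -\<infinity>" unfolding M_def by blast
      have "h y = -\<infinity>" if y: "y \<in> A" for y
      proof (rule ccontr)
        assume hy: "h y \<noteq> -\<infinity>"
        define z where "z = 2 *\<^sub>R y + (-1) *\<^sub>R x0"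
        have zA: "z \<in> A" unfolding z_def using mem_affine[OF aA y x0(1), of 2 "-1"] by simp
        have "h z \<noteq> \<infinity>" using zA P0 unfolding P_def by blast
        then have hz: "h z < \<infinity>" by (simp add: less_top)
        have "h ((1/2) *\<^sub>R x0 + (1 - 1/2) *\<^sub>R z) = -\<infinity>"
          using mix_minus[OF epi x0(1) zA x0(2) hz, of "1/2"] by simp
        moreover have "(1/2) *\<^sub>R x0 + (1 - 1/2) *\<^sub>R z = y" unfolding z_def
          by (simp add: algebra_simps)
        ultimately show False using hy by simp
      qed
      then have "constant_on_set h A" unfolding constant_on_set_def by blast
      then show ?thesis using good_Nil by blast
    qed
  next
    case Pne: False
    show ?thesis
    proof (cases "M = {}")
      case M0: True
      obtain x0 where x0: "x0 \<in> A" "h x0 = \<infinity>" using Pne unfolding P_def by blast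
      have "h y = \<infinity>" if y: "y \<in> A" for y
      proof (rule ccontr)
        assume hy: "h y \<noteq> \<infinity>"
        define z where "z = 2 *\<^sub>R y + (-1) *\<^sub>R x0"
        have zA: "z \<in> A" unfolding z_def using mem_affine[OF aA y x0(1), of 2 "-1"] by simp
        have "h z \<noteq> -\<infinity>" using zA M0 unfolding M_def by blast
        then have hz: "h z > -\<infinity>" by (simp add: bot_less)
        have "h ((1/2) *\<^sub>R x0 + (1 - 1/2) *\<^sub>R z) = \<infinity>"
          using mix_plus[OF hyp x0(1) zA x0(2) hz, of "1/2"] by simp
        moreover have "(1/2) *\<^sub>R x0 + (1 - 1/2) *\<^sub>R z = y" unfolding z_def
          by (simp add: algebra_simps)
        ultimately show False using hy by simp
      qed
      then have "constant_on_set h A" unfolding constant_on_set_def by blast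
      then show ?thesis using good_Nil by blast
    next
      case Mne: False
      define Q where "Q = {x\<in>A. h x \<noteq> \<infinity>}"
      have Qne: "Q \<noteq> {}" using Mne unfolding M_def Q_def by auto
      have cP: "convex P" unfolding convex_def
      proof (intro ballI allI impI)
        fix x y u v assume xy: "x \<in> P" "y \<in> P" and uv: "(0::real) \<le> u" "0 \<le> v" "u + v = 1"
        have z: "u *\<^sub>R x + v *\<^sub>R y \<in> A" using convexD[OF affine_imp_convex[OF aA], of x y u v] xy uv
          unfolding P_def by blast
        show "u *\<^sub>R x + v *\<^sub>R y \<in> P"
        proof (cases "u = 0")
          case True then show ?thesis using xy uv by simp
        next
          case False
          then have "h (u *\<^sub>R x + (1 - u) *\<^sub>R y) = \<infinity>"
            using mix_plus[OF hyp, of x y u] xy uv unfolding P_def by simp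
          then show ?thesis using z uv unfolding P_def by (simp add: eq_diff_eq[symmetric])
        qed
      qed
      have cQ: "convex Q" unfolding convex_def
      proof (intro ballI allI impI)
        fix x y u v assume xy: "x \<in> Q" "y \<in> Q" and uv: "(0::real) \<le> u" "0 \<le> v" "u + v = 1"
        obtain mx where mx: "h x \<le> ereal mx" using ereal_ub[of "h x"] xy unfolding Q_def by (auto simp: less_top)
        obtain my where my: "h y \<le> ereal my" using ereal_ub[of "h y"] xy unfolding Q_def by (auto simp: less_top)
        have "u *\<^sub>R x + v *\<^sub>R y \<in> A \<and> h (u *\<^sub>R x + v *\<^sub>R y) \<le> ereal (u * mx + v * my)"
          using convex_pairD[OF epi, of x mx y my u v] xy uv mx my unfolding Q_def by blast
        then show "u *\<^sub>R x + v *\<^sub>R y \<in> Q" unfolding Q_def by auto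
      qed
      define S where "S = (\<Union>x\<in>P. \<Union>y\<in>Q. {x - y})"
      have cS: "convex S" unfolding S_def using convex_differences[OF cP cQ] .
      have Sne: "S \<noteq> {}" using Pne Qne unfolding S_def by auto
      have S0: "0 \<notin> S" unfolding S_def P_def Q_def by auto
      obtain a where a: "a \<in> span S" "a \<noteq> 0" "\<And>x. x \<in> S \<Longrightarrow> 0 \<le> a \<bullet> x"
        using separating_hyperplane_set_0_inspan[OF cS Sne S0] by blast
      obtain a0 where a0: "a0 \<in> A" using ne by blast
      define L where "L = (\<lambda>x. x - a0) ` A"
      have sL: "subspace L" unfolding L_def using affine_diffs_subspace_subtract[OF aA a0] .
      have SL: "S \<subseteq> L"
      proof
        fix s assume "s \<in> S"
        then obtain p q where pq: "p \<in> P" "q \<in> Q" "s = p - q" unfolding S_def by blast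
        have "p + 1 *\<^sub>R (a0 - q) \<in> A"
          using mem_affine_3_minus[OF aA, of p a0 q 1] pq a0 unfolding P_def Q_def by blast
        moreover have "(p + 1 *\<^sub>R (a0 - q)) - a0 = s" using pq by simp
        ultimately show "s \<in> L" unfolding L_def by (metis image_eqI)
      qed
      have aL: "a \<in> L" using a(1) span_minimal[OF SL sL] by blast
      have line: "a0 + t *\<^sub>R a \<in> A" for t
      proof -
        have "t *\<^sub>R a \<in> L" using subspace_scale[OF sL aL] .
        then obtain w where "w \<in> A" "t *\<^sub>R a = w - a0" unfolding L_def by blast
        then show ?thesis by (simp add: algebra_simps)
      qed
      have aa: "a \<bullet> a > 0" using a(2) by simp
      have level: "\<exists>x\<in>A. a \<bullet> x = c" for c
      proof -
        have "a \<bullet> (a0 + ((c - a \<bullet> a0) / (a \<bullet> a)) *\<^sub>R a) = c"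
          using aa by (simp add: inner_add_right)
        then show ?thesis using line by blast
      qed
      have pq: "a \<bullet> q \<le> a \<bullet> p" if "p \<in> P" "q \<in> Q" for p q
      proof -
        have "p - q \<in> S" unfolding S_def using that by blast
        then show ?thesis using a(3)[of "p - q"] by (simp add: inner_diff_right)
      qed
      define d where "d = Inf ((\<lambda>p. a \<bullet> p) ` P)"
      obtain q0 where q0: "q0 \<in> Q" using Qne by blast
      have dP: "d \<le> a \<bullet> p" if "p \<in> P" for p
        unfolding d_def
      proof (rule cInf_lower)
        show "a \<bullet> p \<in> (\<lambda>p. a \<bullet> p) ` P" using that by blast
        show "bdd_below ((\<lambda>p. a \<bullet> p) ` P)" unfolding bdd_below_def using pq q0 by blast
      qed
      have dQ: "a \<bullet> q \<le> d" if "q \<in> Q" for q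
        unfolding d_def
      proof (rule cInf_greatest)
        show "(\<lambda>p. a \<bullet> p) ` P \<noteq> {}" using Pne by blast
        show "\<And>x. x \<in> (\<lambda>p. a \<bullet> p) ` P \<Longrightarrow> a \<bullet> q \<le> x" using pq that by blast
      qed
      have plus: "\<forall>x\<in>A. a \<bullet> x > d \<longrightarrow> h x = \<infinity>"
      proof (intro ballI impI)
        fix x assume "x \<in> A" "a \<bullet> x > d"
        then have "x \<notin> Q" using dQ by force
        then show "h x = \<infinity>" using \<open>x \<in> A\<close> unfolding Q_def by blast
      qed
      have minus: "\<forall>y\<in>A. a \<bullet> y < d \<longrightarrow> h y = -\<infinity>"
      proof (intro ballI impI)
        fix y assume yA: "y \<in> A" and yd: "a \<bullet> y < d"
        show "h y = -\<infinity>"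
        proof (rule ccontr)
          assume hy: "h y \<noteq> -\<infinity>"
          then have hy': "h y > -\<infinity>" by (simp add: bot_less)
          obtain x where xA: "x \<in> A" and xd: "a \<bullet> x = d + 1" using level by blast
          have hx: "h x = \<infinity>" using plus xA xd by simp
          define u where "u = (d - a \<bullet> y) / (2 * (a \<bullet> x - a \<bullet> y))"
          have pos: "a \<bullet> x - a \<bullet> y > 0" using xd yd by simp
          have u0: "0 < u" unfolding u_def using pos yd by simp
          have u1: "u \<le> 1" unfolding u_def using pos xd yd by (simp add: field_simps)
          define z where "z = u *\<^sub>R x + (1 - u) *\<^sub>R y"
          have zA: "z \<in> A" unfolding z_def using mem_affine[OF aA xA yA, of u "1 - u"] by simp
          have hz: "h z = \<infinity>" unfolding z_def using mix_plus[OF hyp xA yA hx hy' u0 u1] .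
          have "a \<bullet> z = a \<bullet> y + u * (a \<bullet> x - a \<bullet> y)"
            unfolding z_def by (simp add: inner_add_right algebra_simps)
          also have "\<dots> = a \<bullet> y + (d - a \<bullet> y) / 2"
            using aux_div[of "a \<bullet> x - a \<bullet> y" "d - a \<bullet> y"] pos unfolding u_def by simp
          finally have "a \<bullet> z < d" using yd by (simp add: field_simps)
          moreover have "z \<in> P" unfolding P_def using zA hz by simp
          ultimately show False using dP by force
        qed
      qed
      define A' where "A' = {x\<in>A. a \<bullet> x = d}"
      have aA': "affine A'"
      proof -
        have "A' = A \<inter> {x. a \<bullet> x = d}" unfolding A'_def by auto
        then show ?thesis using affine_Int[OF aA affine_hyperplane] by simp
      qed
      have neA': "A' \<noteq> {}" unfolding A'_def using level by blast
      obtain xg where xg: "xg \<in> A" "a \<bullet> xg = d + 1" using level by blast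
      have sub: "A' \<subset> A"
      proof -
        have "xg \<notin> A'" unfolding A'_def using xg by simp
        then show ?thesis unfolding A'_def using xg by blast
      qed
      have "aff_dim A' < aff_dim A"
      proof -
        have h1: "affine hull A' = A'" using aA' affine_hull_eq by blast
        have h2: "affine hull A = A" using aA affine_hull_eq by blast
        show ?thesis using aff_dim_psubset[of A' A] sub unfolding h1 h2 by blast
      qed
      moreover have "aff_dim A' \<ge> 0" using neA' aff_dim_geq[of A'] aff_dim_empty[of A'] by linarith
      ultimately have dimlt: "nat (aff_dim A') < nat (aff_dim A)" by simp
      have hypl: "convex {(x, \<mu>::real). a \<bullet> x = d}"
      proof (rule convex_pairI[where P="\<lambda>x m. a \<bullet> x = d"])
        fix x1 x2 :: 'a and m1 m2 u v :: real
        assume "a \<bullet> x1 = d" "a \<bullet> x2 = d" "0 \<le> u" "0 \<le> v" "u + v = 1"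
        then show "a \<bullet> (u *\<^sub>R x1 + v *\<^sub>R x2) = d"
          by (simp add: inner_add_right distrib_right[symmetric])
      qed
      have "{(x,\<mu>::real). x \<in> A' \<and> h x \<le> ereal \<mu>} = {(x,\<mu>::real). x \<in> A \<and> h x \<le> ereal \<mu>} \<inter> {(x, \<mu>::real). a \<bullet> x = d}"
        unfolding A'_def by auto
      then have epi': "convex {(x,\<mu>::real). x \<in> A' \<and> h x \<le> ereal \<mu>}"
        using convex_Int[OF epi hypl] by simp
      have "{(x,\<mu>::real). x \<in> A' \<and> ereal \<mu> \<le> h x} = {(x,\<mu>::real). x \<in> A \<and> ereal \<mu> \<le> h x} \<inter> {(x, \<mu>::real). a \<bullet> x = d}"
        unfolding A'_def by auto
      then have hyp': "convex {(x,\<mu>::real). x \<in> A' \<and> ereal \<mu> \<le> h x}"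
        using convex_Int[OF hyp hypl] by simp
      obtain eta' delta' where g': "good h A' eta' delta'"
        using less(1)[OF dimlt aA' neA' epi' hyp'] by blast
      have lin: "linear (\<lambda>x. a \<bullet> x)" by (simp add: linear_iff inner_add_right)
      have ne1: "{x\<in>A. a \<bullet> x = d} \<noteq> {}" using neA' unfolding A'_def .
      have ne2: "{x\<in>A. a \<bullet> x > d} \<noteq> {}" using level[of "d + 1"] by force
      have ne3: "{x\<in>A. a \<bullet> x < d} \<noteq> {}" using level[of "d - 1"] by force
      have "good h A ((\<lambda>x. a \<bullet> x) # eta') (d # delta')"
        by (rule good_Cons[OF lin ne1 ne2 ne3 plus minus]) (use g' in \<open>simp add: A'_def\<close>)
      then show ?thesis by blast
    qed
  qed
qed


theorem theorem5:
  fixes h :: "'a::euclidean_space \<Rightarrow> ereal"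
  shows "generalized_affine h \<longleftrightarrow>
    (\<exists>(eta :: ('a \<Rightarrow> real) list) (delta :: real list).
       length delta = length eta \<and>
       (\<forall>i<length eta. linear (eta ! i)) \<and>
       lin_indep_functionals eta \<and>
       (\<forall>i<length eta. Hset eta delta (Suc i) \<noteq> {} \<and>
                        Cplus eta delta i \<noteq> {} \<and> Cminus eta delta i \<noteq> {}) \<and>
       (\<forall>i<length eta. \<forall>x\<in>Cplus eta delta i. h x = \<infinity>) \<and>
       (\<forall>i<length eta. \<forall>x\<in>Cminus eta delta i. h x = - \<infinity>) \<and>
       (affine_on_set h (Hset eta delta (length eta)) \<or>
        constant_on_set h (Hset eta delta (length eta))))"
proof
  assume ga: "generalized_affine h"
  have epi: "convex {(x,\<mu>::real). x \<in> UNIV \<and> h x \<le> ereal \<mu>}"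
    using ga unfolding generalized_affine_def ext_convex_def by simp
  have hyp: "convex {(x,\<mu>::real). x \<in> UNIV \<and> ereal \<mu> \<le> h x}"
    using ga unfolding generalized_affine_def ext_concave_def by simp
  obtain eta delta where g: "good h UNIV eta delta"
    using main_lemma[OF affine_UNIV UNIV_not_empty epi hyp] by blast
  have li: "lin_indep_functionals eta"
    using lin_indep_from[of eta UNIV delta] g unfolding good_def by blast
  show "\<exists>(eta :: ('a \<Rightarrow> real) list) (delta :: real list).
       length delta = length eta \<and>
       (\<forall>i<length eta. linear (eta ! i)) \<and>
       lin_indep_functionals eta \<and>
       (\<forall>i<length eta. Hset eta delta (Suc i) \<noteq> {} \<and>
                        Cplus eta delta i \<noteq> {} \<and> Cminus eta delta i \<noteq> {}) \<and>
       (\<forall>i<length eta. \<forall>x\<in>Cplus eta delta i. h x = \<infinity>) \<and>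
       (\<forall>i<length eta. \<forall>x\<in>Cminus eta delta i. h x = - \<infinity>) \<and>
       (affine_on_set h (Hset eta delta (length eta)) \<or>
        constant_on_set h (Hset eta delta (length eta)))"
    apply (rule exI[of _ eta], rule exI[of _ delta])
    using g li unfolding good_def Cplus_def Cminus_def Hset_Hs by auto
next
  assume "\<exists>(eta :: ('a \<Rightarrow> real) list) (delta :: real list).
       length delta = length eta \<and>
       (\<forall>i<length eta. linear (eta ! i)) \<and>
       lin_indep_functionals eta \<and>
       (\<forall>i<length eta. Hset eta delta (Suc i) \<noteq> {} \<and>
                        Cplus eta delta i \<noteq> {} \<and> Cminus eta delta i \<noteq> {}) \<and>
       (\<forall>i<length eta. \<forall>x\<in>Cplus eta delta i. h x = \<infinity>) \<and>
       (\<forall>i<length eta. \<forall>x\<in>Cminus eta delta i. h x = - \<infinity>) \<and>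
       (affine_on_set h (Hset eta delta (length eta)) \<or>
        constant_on_set h (Hset eta delta (length eta)))"
  then obtain eta :: "('a \<Rightarrow> real) list" and delta where
    c1: "length delta = length eta" and c2: "\<forall>i<length eta. linear (eta ! i)"
    and c5: "\<forall>i<length eta. \<forall>x\<in>Cplus eta delta i. h x = \<infinity>"
    and c6: "\<forall>i<length eta. \<forall>x\<in>Cminus eta delta i. h x = - \<infinity>"
    and c7: "affine_on_set h (Hset eta delta (length eta)) \<or> constant_on_set h (Hset eta delta (length eta))"
    by blast
  have p: "\<forall>i<length eta. \<forall>x\<in>Hs UNIV eta delta i. (eta!i) x > delta!i \<longrightarrow> h x = \<infinity>"
    using c5 unfolding Cplus_def Hset_Hs by blast
  have m: "\<forall>i<length eta. \<forall>x\<in>Hs UNIV eta delta i. (eta!i) x < delta!i \<longrightarrow> h x = -\<infinity>"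
    using c6 unfolding Cminus_def Hset_Hs by blast
  have f: "affine_on_set h (Hs UNIV eta delta (length eta)) \<or> constant_on_set h (Hs UNIV eta delta (length eta))"
    using c7 unfolding Hset_Hs .
  have "convex {(x,\<mu>::real). x \<in> UNIV \<and> h x \<le> ereal \<mu>}"
    by (rule epi_convex[OF convex_UNIV c1 c2 p m f])
  moreover have "convex {(x,\<mu>::real). x \<in> UNIV \<and> ereal \<mu> \<le> h x}"
    by (rule hyp_convex[OF convex_UNIV c1 c2 p m f])
  ultimately show "generalized_affine h"
    unfolding generalized_affine_def ext_convex_def ext_concave_def by simp
qed

end
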